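(* Let $\Omega$ be an open set in $\mathbb{R}^n$ and $\Gamma$ a closed subset of $\partial\Omega$. Let $1\le q\le\infty$, $\mu\in\mathsf{M}^q(\Omega)$, and let $0\le t\le n(q-1)/q$ if $1\le q<\infty$, resp. $0\le t\le n$ if $q=\infty$. Then $\nu:=\delta_\Gamma^{-t}\mu$ satisfies $\nu\in\mathsf{M}_\Gamma^{qn/(n+qt)}(\Omega)$ if $1\le q<\infty$, and $\nu\in\mathsf{M}_\Gamma^{n/t}(\Omega)$ if $q=\infty$.
   Context: $\delta_\Gamma(x)=\mathrm{dist}(x,\Gamma)$. For $1\le q\le\infty$, $q'=q/(q-1)$ ($1'=\infty$, $\infty'=1$), and $n/\infty=0$ (so $n/0=\infty$ when $t=0$). The Morrey space $\mathsf{M}^q(\Omega)$ is the set of regular signed measures $\mu$ on $\Omega$ with $\sup\{r^{-n/q'}|\mu|(\Omega\cap B(x,r)): x\in\Omega,\ 0<r<\infty\}<\infty$. $\mathsf{M}^q_\Gamma(\Omega)$ is the set of $\nu=\nu_+-\nu_-$ with $\nu_\pm$ nonnegative Radon measures on $\Omega$ and $\sup\{r^{-n/q'}|\nu|(\Omega\cap B(x,r)): x\in\Omega,\ 0<r<\delta_\Gamma(x)/2\}<\infty$. The charge $\delta_\Gamma^{-t}\mu$ is $\varphi\mapsto\int_\Omega\varphi\,\delta_\Gamma^{-t}\,d\mu$. *)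

theory Defs
  imports "HOL-Analysis.Analysis"
begin

text \<open>Scaling exponent n/q' for 1 \<le> q \<le> \<infinity>, with q' = q/(q-1), n/\<infinity> = 0:
  equals n (q-1)/q for finite q and n for q = \<infinity>.\<close>
definition morrey_exp :: "nat \<Rightarrow> ereal \<Rightarrow> real" where
  "morrey_exp n q = (if q = \<infinity> then real n else real n * (1 - 1 / real_of_ereal q))"

text \<open>A (locally finite) signed measure on the open set \<Omega>, given by its Jordan
  decomposition (P, N): two mutually singular nonnegative Radon measures carried by \<Omega>.\<close>
definition signed_radon_on :: "'a::euclidean_space set \<Rightarrow> 'a measure \<Rightarrow> 'a measure \<Rightarrow> bool" where
  "signed_radon_on \<Omega> P N \<longleftrightarrow>
     sets P = sets borel \<and> sets N = sets borel \<and>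
     emeasure P (- \<Omega>) = 0 \<and> emeasure N (- \<Omega>) = 0 \<and>
     (\<exists>A\<in>sets borel. emeasure P A = 0 \<and> emeasure N (- A) = 0) \<and>
     (\<forall>K. compact K \<and> K \<subseteq> \<Omega> \<longrightarrow> emeasure P K < \<infinity> \<and> emeasure N K < \<infinity>)"

definition total_var :: "'a measure \<Rightarrow> 'a measure \<Rightarrow> 'a set \<Rightarrow> ennreal" where
  "total_var P N A = emeasure P A + emeasure N A"

definition Morrey :: "ereal \<Rightarrow> 'a::euclidean_space set \<Rightarrow> ('a measure \<times> 'a measure) set" where
  "Morrey q \<Omega> = {(P, N). signed_radon_on \<Omega> P N \<and>
     (\<exists>C::real. \<forall>x\<in>\<Omega>. \<forall>r>0.
        total_var P N (\<Omega> \<inter> ball x r) \<le> ennreal (C * r powr morrey_exp DIM('a) q))}"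

text \<open>Condition 0 < r < \<delta>_\<Gamma>(x)/2, with \<delta>_\<Gamma> = \<infinity> when \<Gamma> is empty.\<close>
definition below_half_dist :: "'a::euclidean_space set \<Rightarrow> 'a \<Rightarrow> real \<Rightarrow> bool" where
  "below_half_dist \<Gamma> x r \<longleftrightarrow> \<Gamma> = {} \<or> r < infdist x \<Gamma> / 2"

definition Morrey_Gamma :: "ereal \<Rightarrow> 'a::euclidean_space set \<Rightarrow> 'a set \<Rightarrow> ('a measure \<times> 'a measure) set" where
  "Morrey_Gamma q \<Omega> \<Gamma> = {(P, N). signed_radon_on \<Omega> P N \<and>
     (\<exists>C::real. \<forall>x\<in>\<Omega>. \<forall>r>0. below_half_dist \<Gamma> x r \<longrightarrow>
        total_var P N (\<Omega> \<inter> ball x r) \<le> ennreal (C * r powr morrey_exp DIM('a) q))}"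

text \<open>The weight \<delta>_\<Gamma>(x)^(-t), with the convention \<delta>_\<Gamma> = \<infinity> if \<Gamma> = {}.\<close>
definition delta_negpow :: "'a::euclidean_space set \<Rightarrow> real \<Rightarrow> 'a \<Rightarrow> real" where
  "delta_negpow \<Gamma> t x =
     (if \<Gamma> = {} then (if t = 0 then 1 else 0) else infdist x \<Gamma> powr (- t))"

definition weighted_charge :: "'a::euclidean_space set \<Rightarrow> real \<Rightarrow> 'a measure \<times> 'a measure
    \<Rightarrow> 'a measure \<times> 'a measure" where
  "weighted_charge \<Gamma> t \<mu> =
     (density (fst \<mu>) (\<lambda>x. ennreal (delta_negpow \<Gamma> t x)),
      density (snd \<mu>) (\<lambda>x. ennreal (delta_negpow \<Gamma> t x)))"

end

theory Submission
  imports Defs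
begin

lemma infdist_meas: "(\<lambda>x::'a::euclidean_space. infdist x G) \<in> borel_measurable borel"
  by (intro borel_measurable_continuous_onI continuous_on_infdist continuous_on_id)

lemma w_meas: "(\<lambda>x. ennreal (delta_negpow (G::'a::euclidean_space set) t x)) \<in> borel_measurable borel"
proof -
  have m: "(\<lambda>x::'a. infdist x G) \<in> borel_measurable borel" by (rule infdist_meas)
  show ?thesis unfolding delta_negpow_def
    by (cases "G = {}") (use m in \<open>auto intro!: measurable_compose[OF _ measurable_ennreal]\<close>)
qed

lemma w_meas_M: assumes "sets M = sets (borel::'a::euclidean_space measure)"
  shows "(\<lambda>x. ennreal (delta_negpow (G::'a set) t x)) \<in> borel_measurable M"
  using w_meas measurable_cong_sets[OF assms refl] by blast

lemma dens_le:
  fixes M :: "'a::euclidean_space measure"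
  assumes "sets M = sets borel" "A \<in> sets borel" "\<And>x. x\<in>A \<Longrightarrow> delta_negpow G t x \<le> c" "0 \<le> c"
  shows "emeasure (density M (\<lambda>x. ennreal (delta_negpow G t x))) A \<le> ennreal c * emeasure M A"
proof -
  have m: "(\<lambda>x. ennreal (delta_negpow G t x)) \<in> borel_measurable M" by (rule w_meas_M[OF assms(1)])
  have "emeasure (density M (\<lambda>x. ennreal (delta_negpow G t x))) A
      = (\<integral>\<^sup>+x\<in>A. ennreal (delta_negpow G t x) \<partial>M)"
    by (rule emeasure_density[OF m]) (simp add: assms)
  also have "\<dots> \<le> (\<integral>\<^sup>+x\<in>A. ennreal c \<partial>M)"
    by (intro nn_integral_mono) (auto simp: assms ennreal_leI split: split_indicator)
  also have "\<dots> = ennreal c * emeasure M A"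
    by (rule nn_integral_cmult_indicator) (simp add: assms)
  finally show ?thesis .
qed

lemma dens_null:
  fixes M :: "'a::euclidean_space measure"
  assumes "sets M = sets borel" "A \<in> sets borel" "emeasure M A = 0"
  shows "emeasure (density M (\<lambda>x. ennreal (delta_negpow G t x))) A = 0"
proof -
  have m: "(\<lambda>x. ennreal (delta_negpow G t x)) \<in> borel_measurable M" by (rule w_meas_M[OF assms(1)])
  have "A \<in> null_sets M" using assms by (simp add: null_sets_def)
  hence "AE x\<in>A in M. ennreal (delta_negpow G t x) = 0"
    by (auto intro: AE_I' [where N=A])
  hence "A \<in> null_sets (density M (\<lambda>x. ennreal (delta_negpow G t x)))"
    using null_sets_density_iff[OF m] assms by simp
  thus ?thesis by auto
qed

lemma w_bdd_compact:
  fixes \<Omega> \<Gamma> K :: "'a::euclidean_space set"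
  assumes "open \<Omega>" "closed \<Gamma>" "\<Gamma> \<subseteq> frontier \<Omega>" "compact K" "K \<subseteq> \<Omega>" "0 \<le> t"
  shows "\<exists>c\<ge>0. \<forall>x\<in>K. delta_negpow \<Gamma> t x \<le> c"
proof (cases "\<Gamma> = {} \<or> K = {}")
  case True
  then show ?thesis
    by (rule disjE) (auto simp: delta_negpow_def intro!: exI[of _ 1])
next
  case False
  then have G: "\<Gamma> \<noteq> {}" and K: "K \<noteq> {}" by auto
  obtain x0 where x0: "x0 \<in> K" "\<And>y. y\<in>K \<Longrightarrow> infdist x0 \<Gamma> \<le> infdist y \<Gamma>"
    using continuous_attains_inf[OF assms(4) K continuous_on_infdist[OF continuous_on_id, of K \<Gamma>]] by auto
  have "x0 \<notin> \<Gamma>" using x0(1) assms(1,3,5) by (auto simp: frontier_def interior_open)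
  hence d: "0 < infdist x0 \<Gamma>" using infdist_pos_not_in_closed[OF assms(2) G] by blast
  show ?thesis
  proof (intro exI[of _ "infdist x0 \<Gamma> powr (-t)"] conjI ballI)
    fix y assume "y \<in> K"
    then show "delta_negpow \<Gamma> t y \<le> infdist x0 \<Gamma> powr (-t)"
      using G d x0(2)[of y] assms(6) by (auto simp: delta_negpow_def intro!: powr_mono2')
  qed simp
qed

lemma exp_eq:
  fixes n :: nat and q :: ereal and t :: real
  assumes "n \<ge> 1" "1 \<le> q" "0 \<le> t"
  shows "morrey_exp n (if q \<noteq> \<infinity>
            then ereal (real_of_ereal q * real n / (real n + real_of_ereal q * t))
            else (if t = 0 then \<infinity> else ereal (real n / t))) = morrey_exp n q - t"
proof (cases "q = \<infinity>")
  case True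
  then show ?thesis using assms by (auto simp: morrey_exp_def field_simps)
next
  case False
  then obtain r where q: "q = ereal r" using assms(2) by (cases q) auto
  have r: "r \<ge> 1" using assms(2) q by auto
  have "real n > 0" using assms by auto
  then show ?thesis using q r False assms(3)
    by (simp add: morrey_exp_def field_simps)
qed

theorem proposition6p1:
  fixes \<Omega> \<Gamma> :: "'a::euclidean_space set" and q :: ereal and t :: real
    and \<mu> :: "'a measure \<times> 'a measure"
  assumes "open \<Omega>" and "closed \<Gamma>" and "\<Gamma> \<subseteq> frontier \<Omega>"
    and "1 \<le> q" and "\<mu> \<in> Morrey q \<Omega>"
    and "0 \<le> t"
    and "q \<noteq> \<infinity> \<Longrightarrow> t \<le> real DIM('a) * (real_of_ereal q - 1) / real_of_ereal q"
    and "q = \<infinity> \<Longrightarrow> t \<le> real DIM('a)"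
  shows "weighted_charge \<Gamma> t \<mu> \<in> Morrey_Gamma
           (if q \<noteq> \<infinity>
            then ereal (real_of_ereal q * real DIM('a) / (real DIM('a) + real_of_ereal q * t))
            else (if t = 0 then \<infinity> else ereal (real DIM('a) / t)))
           \<Omega> \<Gamma>"
proof -
  obtain P N where mu: "\<mu> = (P, N)" by (cases \<mu>)
  define w where "w = (\<lambda>x. ennreal (delta_negpow \<Gamma> t x))"
  define e where "e = morrey_exp DIM('a) q"
  have sr: "signed_radon_on \<Omega> P N" and
    "\<exists>C::real. \<forall>x\<in>\<Omega>. \<forall>r>0. total_var P N (\<Omega> \<inter> ball x r) \<le> ennreal (C * r powr e)"
    using assms(5) by (auto simp: mu Morrey_def e_def)
  then obtain C where C: "\<And>x r. x\<in>\<Omega> \<Longrightarrow> r > 0 \<Longrightarrow>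
      total_var P N (\<Omega> \<inter> ball x r) \<le> ennreal (C * r powr e)" by blast
  define C' where "C' = max C 0"
  have C': "total_var P N (\<Omega> \<inter> ball x r) \<le> ennreal (C' * r powr e)" if "x\<in>\<Omega>" "r > 0" for x r
  proof -
    have "ennreal (C * r powr e) \<le> ennreal (C' * r powr e)"
      by (intro ennreal_leI mult_right_mono) (auto simp: C'_def)
    thus ?thesis using C[OF that] by order
  qed
  have sP: "sets P = sets borel" and sN: "sets N = sets borel" using sr by (auto simp: signed_radon_on_def)
  have WC: "weighted_charge \<Gamma> t \<mu> = (density P w, density N w)"
    by (simp add: weighted_charge_def mu w_def)
  have cl: "- \<Omega> \<in> sets borel" using assms(1) by auto
  have sr': "signed_radon_on \<Omega> (density P w) (density N w)"
  proof -
    have a: "emeasure (density P w) (- \<Omega>) = 0" "emeasure (density N w) (- \<Omega>) = 0"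
      unfolding w_def using sr sP sN cl by (auto simp: signed_radon_on_def intro!: dens_null)
    obtain A where A: "A\<in>sets borel" "emeasure P A = 0" "emeasure N (- A) = 0"
      using sr by (auto simp: signed_radon_on_def)
    have b: "emeasure (density P w) A = 0 \<and> emeasure (density N w) (- A) = 0"
      unfolding w_def using A sP sN by (auto intro!: dens_null)
    have c: "emeasure (density P w) K < \<infinity> \<and> emeasure (density N w) K < \<infinity>"
      if K: "compact K" "K \<subseteq> \<Omega>" for K
    proof -
      obtain c where c: "c \<ge> 0" "\<And>x. x\<in>K \<Longrightarrow> delta_negpow \<Gamma> t x \<le> c"
        using w_bdd_compact[OF assms(1,2,3) K assms(6)] by blast
      have Kb: "K \<in> sets borel" using K(1) compact_imp_closed borel_closed by blast
      have fin: "emeasure P K < \<infinity>" "emeasure N K < \<infinity>" using sr K by (auto simp: signed_radon_on_def)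
      have "emeasure (density P w) K \<le> ennreal c * emeasure P K"
        unfolding w_def by (rule dens_le[OF sP Kb c(2) c(1)])
      moreover have "emeasure (density N w) K \<le> ennreal c * emeasure N K"
        unfolding w_def by (rule dens_le[OF sN Kb c(2) c(1)])
      moreover have "ennreal c * emeasure P K < \<infinity>" "ennreal c * emeasure N K < \<infinity>"
        using fin by (simp_all add: ennreal_mult_less_top)
      ultimately show ?thesis by (meson le_less_trans)
    qed
    show ?thesis using a b c A(1) sP sN by (auto simp: signed_radon_on_def)
  qed
  have bound: "total_var (density P w) (density N w) (\<Omega> \<inter> ball x r)
      \<le> ennreal (C' * r powr (e - t))"
    if x: "x \<in> \<Omega>" and r: "r > 0" and bh: "below_half_dist \<Gamma> x r" for x r
  proof -
    have wb: "delta_negpow \<Gamma> t y \<le> r powr (-t)" if y: "y \<in> \<Omega> \<inter> ball x r" for y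
    proof (cases "\<Gamma> = {}")
      case True
      then show ?thesis using r by (auto simp: delta_negpow_def)
    next
      case False
      have "r < infdist x \<Gamma> / 2" using bh False by (auto simp: below_half_dist_def)
      moreover have "infdist x \<Gamma> \<le> infdist y \<Gamma> + dist x y" by (rule infdist_triangle)
      moreover have "dist x y < r" using y by auto
      ultimately have "r \<le> infdist y \<Gamma>" by linarith
      then show ?thesis using False r assms(6) by (auto simp: delta_negpow_def intro!: powr_mono2')
    qed
    have Bb: "\<Omega> \<inter> ball x r \<in> sets borel" using assms(1) by auto
    have "total_var (density P w) (density N w) (\<Omega> \<inter> ball x r)
        \<le> ennreal (r powr (-t)) * emeasure P (\<Omega> \<inter> ball x r)
          + ennreal (r powr (-t)) * emeasure N (\<Omega> \<inter> ball x r)"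
      unfolding total_var_def w_def
      by (intro add_mono dens_le[OF sP Bb wb] dens_le[OF sN Bb wb]) auto
    also have "\<dots> = ennreal (r powr (-t)) * total_var P N (\<Omega> \<inter> ball x r)"
      by (simp add: total_var_def distrib_left)
    also have "\<dots> \<le> ennreal (r powr (-t)) * ennreal (C' * r powr e)"
      by (intro mult_left_mono C'[OF x r]) auto
    also have "\<dots> = ennreal (r powr (-t) * (C' * r powr e))"
      by (subst ennreal_mult) (auto simp: C'_def)
    also have "r powr (-t) * (C' * r powr e) = C' * r powr (e - t)"
      by (simp add: powr_add[symmetric] algebra_simps)
    finally show ?thesis .
  qed
  have DIM1: "DIM('a) \<ge> 1" by (simp add: Suc_le_eq)
  show ?thesis
    unfolding WC Morrey_Gamma_def
    using sr' bound exp_eq[OF DIM1 assms(4,6)] by (auto simp: e_def)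
qed

end
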